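(* Let $\mathcal G$ be a DAG with vertex set $\mathbf V$, $\mathbf Y\subseteq\mathbf V$, and $\eta_{\mathfrak a_{\boldsymbol\alpha}}$ an edge intervention that is node consistent for $\mathbf Y$. Then (in any causal structure for $\mathcal G$) $p(\mathbf Y(\mathfrak a_{\boldsymbol\alpha}))=p(\mathbf Y(\mathbf a_{\boldsymbol\alpha}))$, where $\mathbf a_{\boldsymbol\alpha}$ is the induced node intervention.
   Context: Let $\mathcal G$ be a DAG with finite vertex set $\mathbf V$; vertices are random variables with state spaces $\mathfrak X_V$; $\mathfrak X_{\mathbf A}=\prod_{A\in\mathbf A}\mathfrak X_A$; $\mathrm{pa}(V)$ are parents. A causal structure is a collection of one-step potential outcomes $V(\mathbf b)$, $\mathbf b\in\mathfrak X_{\mathrm{pa}(V)}$, with a joint distribution. Node interventions: $V(\mathbf a)=V(\mathbf a_{\mathrm{pa}(V)\cap\mathbf A},\{W(\mathbf a):W\in\mathrm{pa}(V)\setminus\mathbf A\})$ recursively. Edge interventions: for an edge set $\boldsymbol\alpha$, $\mathfrak a\in\mathfrak X_{\boldsymbol\alpha}=\prod_{(AB)\in\boldsymbol\alpha}\mathfrak X_A$ assigns each edge a value of its source; $V(\mathfrak a)=V(\mathfrak a_{\{(WV)\in\boldsymbol\alpha\}},\{W(\mathfrak a):W\in\mathrm{pa}(V),(WV)\notin\boldsymbol\alpha\})$ recursively. A directed path $\beta$ (sequence of distinct vertices joined by directed edges) with sink in $\mathbf Y$ is relevant for $\mathbf Y$ given $\boldsymbol\alpha$ if no edge of $\boldsymbol\alpha$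 lies on $\beta$ except possibly its first edge; $\mathrm{rel}_{\mathcal G}(\mathbf Y\mid\boldsymbol\alpha)$ is their set. $\boldsymbol\alpha$ is live for $\mathbf Y$ if each of its edges is the first edge of some relevant path. $\boldsymbol\alpha$ live for $\mathbf Y$ is consistent for $\mathbf Y$ if for every vertex $A$, the set of first edges of relevant paths with source $A$ is disjoint from or contained in $\boldsymbol\alpha$. $\eta_{\mathfrak a}$ is node consistent for $\mathbf Y$ if $\boldsymbol\alpha$ is live and consistent for $\mathbf Y$ and for every vertex $A$ all edges of $\boldsymbol\alpha$ with source $A$ get the same value; the induced node intervention $\mathbf a_{\boldsymbol\alpha}$ sets each source vertex $A$ of an edge in $\boldsymbol\alpha$ to that common value. *)

theory Defs
  imports "HOL-Probability.Probability"
begin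

definition dag :: "'v set \<Rightarrow> ('v \<times> 'v) set \<Rightarrow> bool" where
  "dag Vs E \<longleftrightarrow> finite Vs \<and> E \<subseteq> Vs \<times> Vs \<and> acyclic E"

definition pa :: "('v \<times> 'v) set \<Rightarrow> 'v \<Rightarrow> 'v set" where
  "pa E V = {W. (W, V) \<in> E}"

text \<open>Causal structure: one-step potential outcomes PO V b \<omega> (b a parent assignment,
  only its values on pa V matter; it is always passed restricted to pa V),
  defined jointly on the sample space of a probability space M, with values in
  the state spaces X.\<close>

definition causal_structure ::
  "'v set \<Rightarrow> ('v \<times> 'v) set \<Rightarrow> ('v \<Rightarrow> 'x set) \<Rightarrow> 'a measure
     \<Rightarrow> ('v \<Rightarrow> ('v \<Rightarrow> 'x) \<Rightarrow> 'a \<Rightarrow> 'x) \<Rightarrow> bool" where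
  "causal_structure Vs E X M PO \<longleftrightarrow> prob_space M \<and>
     (\<forall>V\<in>Vs. \<forall>b\<in>Pi\<^sub>E (pa E V) X. \<forall>\<omega>\<in>space M. PO V b \<omega> \<in> X V)"

text \<open>Generic recursive counterfactual: g W V = Some x means the edge W -> V
  receives the fixed value x; None means it passes on the counterfactual value of W.
  The counterfactual values are the unique solution of the recursive equations
  (unique since the graph is a DAG).\<close>

definition cf ::
  "'v set \<Rightarrow> ('v \<times> 'v) set \<Rightarrow> ('v \<Rightarrow> ('v \<Rightarrow> 'x) \<Rightarrow> 'a \<Rightarrow> 'x)
     \<Rightarrow> ('v \<Rightarrow> 'v \<Rightarrow> 'x option) \<Rightarrow> 'a \<Rightarrow> 'v \<Rightarrow> 'x" where
  "cf Vs E PO g \<omega> = (THE f. f \<in> extensional Vs \<and>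
      (\<forall>V\<in>Vs. f V = PO V (restrict (\<lambda>W. case g W V of Some x \<Rightarrow> x | None \<Rightarrow> f W) (pa E V)) \<omega>))"

definition node_cf ::
  "'v set \<Rightarrow> ('v \<times> 'v) set \<Rightarrow> ('v \<Rightarrow> ('v \<Rightarrow> 'x) \<Rightarrow> 'a \<Rightarrow> 'x)
     \<Rightarrow> 'v set \<Rightarrow> ('v \<Rightarrow> 'x) \<Rightarrow> 'a \<Rightarrow> 'v \<Rightarrow> 'x" where
  "node_cf Vs E PO A a = cf Vs E PO (\<lambda>W V. if W \<in> A then Some (a W) else None)"

definition edge_cf ::
  "'v set \<Rightarrow> ('v \<times> 'v) set \<Rightarrow> ('v \<Rightarrow> ('v \<Rightarrow> 'x) \<Rightarrow> 'a \<Rightarrow> 'x)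
     \<Rightarrow> ('v \<times> 'v) set \<Rightarrow> ('v \<times> 'v \<Rightarrow> 'x) \<Rightarrow> 'a \<Rightarrow> 'v \<Rightarrow> 'x" where
  "edge_cf Vs E PO alpha aa = cf Vs E PO (\<lambda>W V. if (W, V) \<in> alpha then Some (aa (W, V)) else None)"

definition dpath :: "'v set \<Rightarrow> ('v \<times> 'v) set \<Rightarrow> 'v list \<Rightarrow> bool" where
  "dpath Vs E p \<longleftrightarrow> p \<noteq> [] \<and> distinct p \<and> set p \<subseteq> Vs \<and>
     (\<forall>i. Suc i < length p \<longrightarrow> (p ! i, p ! Suc i) \<in> E)"

definition rel :: "'v set \<Rightarrow> ('v \<times> 'v) set \<Rightarrow> 'v set \<Rightarrow> ('v \<times> 'v) set \<Rightarrow> 'v list set" where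
  "rel Vs E Y alpha = {p. dpath Vs E p \<and> last p \<in> Y \<and>
     (\<forall>i. 1 \<le> i \<longrightarrow> Suc i < length p \<longrightarrow> (p ! i, p ! Suc i) \<notin> alpha)}"

definition first_edges :: "'v set \<Rightarrow> ('v \<times> 'v) set \<Rightarrow> 'v set \<Rightarrow> ('v \<times> 'v) set \<Rightarrow> 'v \<Rightarrow> ('v \<times> 'v) set" where
  "first_edges Vs E Y alpha A = {(p ! 0, p ! 1) | p. p \<in> rel Vs E Y alpha \<and> 2 \<le> length p \<and> hd p = A}"

definition live :: "'v set \<Rightarrow> ('v \<times> 'v) set \<Rightarrow> 'v set \<Rightarrow> ('v \<times> 'v) set \<Rightarrow> bool" where
  "live Vs E Y alpha \<longleftrightarrow> (\<forall>e\<in>alpha. \<exists>p\<in>rel Vs E Y alpha. 2 \<le> length p \<and> (p ! 0, p ! 1) = e)"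

definition consistent :: "'v set \<Rightarrow> ('v \<times> 'v) set \<Rightarrow> 'v set \<Rightarrow> ('v \<times> 'v) set \<Rightarrow> bool" where
  "consistent Vs E Y alpha \<longleftrightarrow> live Vs E Y alpha \<and>
     (\<forall>A. first_edges Vs E Y alpha A \<inter> alpha = {} \<or> first_edges Vs E Y alpha A \<subseteq> alpha)"

definition node_consistent ::
  "'v set \<Rightarrow> ('v \<times> 'v) set \<Rightarrow> 'v set \<Rightarrow> ('v \<times> 'v) set \<Rightarrow> ('v \<times> 'v \<Rightarrow> 'x) \<Rightarrow> bool" where
  "node_consistent Vs E Y alpha aa \<longleftrightarrow> consistent Vs E Y alpha \<and>
     (\<forall>e1\<in>alpha. \<forall>e2\<in>alpha. fst e1 = fst e2 \<longrightarrow> aa e1 = aa e2)"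

definition induced_nodes :: "('v \<times> 'v) set \<Rightarrow> 'v set" where
  "induced_nodes alpha = fst ` alpha"

definition induced_vals :: "('v \<times> 'v) set \<Rightarrow> ('v \<times> 'v \<Rightarrow> 'x) \<Rightarrow> 'v \<Rightarrow> 'x" where
  "induced_vals alpha aa W = aa (SOME e. e \<in> alpha \<and> fst e = W)"

end

theory Submission
  imports Defs
begin

lemma dag_wf: assumes "dag Vs E" shows "wf E"
proof -
  from assms have "finite Vs" "E \<subseteq> Vs \<times> Vs" "acyclic E" by (auto simp: dag_def)
  then have "finite E" using finite_subset by blast
  then show ?thesis using \<open>acyclic E\<close> finite_acyclic_wf by blast
qed

lemma cf_char:
  assumes "dag Vs E"
  shows "cf Vs E PO g \<omega> \<in> extensional Vs \<and>
    (\<forall>V\<in>Vs. cf Vs E PO g \<omega> V = PO V (restrict (\<lambda>W. case g W V of Some x \<Rightarrow> x | None \<Rightarrow> cf Vs E PO g \<omega> W) (pa E V)) \<omega>)"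
proof -
  have wf: "wf E" using dag_wf[OF assms] .
  have EV: "E \<subseteq> Vs \<times> Vs" using assms by (simp add: dag_def)
  let ?P = "\<lambda>f. f \<in> extensional Vs \<and>
      (\<forall>V\<in>Vs. f V = PO V (restrict (\<lambda>W. case g W V of Some x \<Rightarrow> x | None \<Rightarrow> f W) (pa E V)) \<omega>)"
  define H where "H = (\<lambda>f V. if V \<in> Vs then PO V (restrict (\<lambda>W. case g W V of Some x \<Rightarrow> x | None \<Rightarrow> f W) (pa E V)) \<omega> else undefined)"
  define F where "F = wfrec E H"
  have Feq: "F V = H F V" for V
  proof -
    have "F V = H (cut F E V) V" unfolding F_def by (rule wfrec[OF wf])
    also have "restrict (\<lambda>W. case g W V of Some x \<Rightarrow> x | None \<Rightarrow> cut F E V W) (pa E V)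
             = restrict (\<lambda>W. case g W V of Some x \<Rightarrow> x | None \<Rightarrow> F W) (pa E V)"
      by (rule restrict_ext) (auto simp: cut_def pa_def split: option.split)
    then have "H (cut F E V) V = H F V" by (simp add: H_def)
    finally show ?thesis .
  qed
  have ex: "?P F"
    using Feq by (auto simp: H_def extensional_def)
  have uniq: "f1 = f2" if "?P f1" "?P f2" for f1 f2
  proof -
    have "\<forall>V. V \<in> Vs \<longrightarrow> f1 V = f2 V"
    proof (rule allI, rule wf_induct[OF wf, where P="\<lambda>V. V \<in> Vs \<longrightarrow> f1 V = f2 V"])
      fix V assume IH: "\<forall>W. (W, V) \<in> E \<longrightarrow> W \<in> Vs \<longrightarrow> f1 W = f2 W"
      show "V \<in> Vs \<longrightarrow> f1 V = f2 V"
      proof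
        assume V: "V \<in> Vs"
        have "restrict (\<lambda>W. case g W V of Some x \<Rightarrow> x | None \<Rightarrow> f1 W) (pa E V)
             = restrict (\<lambda>W. case g W V of Some x \<Rightarrow> x | None \<Rightarrow> f2 W) (pa E V)"
          by (rule restrict_ext) (use IH EV in \<open>auto simp: pa_def split: option.split\<close>)
        then show "f1 V = f2 V" using that V by simp
      qed
    qed
    then show ?thesis using that by (auto intro: extensionalityI)
  qed
  have "?P (THE f. ?P f)" by (rule theI[of ?P F]) (use ex uniq in auto)
  then show ?thesis unfolding cf_def .
qed

lemma path_reach:
  "(\<forall>i. Suc i < length p \<longrightarrow> (p ! i, p ! Suc i) \<in> E) \<Longrightarrow> x \<in> set p \<Longrightarrow> (hd p, x) \<in> E\<^sup>*"
proof (induction p)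
  case Nil then show ?case by simp
next
  case (Cons a p)
  show ?case
  proof (cases "x = a")
    case True then show ?thesis by simp
  next
    case False
    then have x: "x \<in> set p" using Cons.prems by simp
    then have ne: "p \<noteq> []" by auto
    have "\<forall>i. Suc i < length p \<longrightarrow> (p ! i, p ! Suc i) \<in> E"
    proof (intro allI impI)
      fix i assume "Suc i < length p"
      then show "(p ! i, p ! Suc i) \<in> E" using Cons.prems(1)[rule_format, of "Suc i"] by simp
    qed
    then have "(hd p, x) \<in> E\<^sup>*" using Cons.IH x by blast
    moreover have "(a, hd p) \<in> E" using Cons.prems(1)[rule_format, of 0] ne
      by (cases p) auto
    ultimately show ?thesis by simp
  qed
qed

theorem lemma11:
  fixes Vs :: "'v set" and E :: "('v \<times> 'v) set" and X :: "'v \<Rightarrow> 'x set"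
    and M :: "'a measure" and PO :: "'v \<Rightarrow> ('v \<Rightarrow> 'x) \<Rightarrow> 'a \<Rightarrow> 'x"
    and Y :: "'v set" and alpha :: "('v \<times> 'v) set" and aa :: "'v \<times> 'v \<Rightarrow> 'x"
    and N :: "('v \<Rightarrow> 'x) measure"
  assumes "dag Vs E"
    and "causal_structure Vs E X M PO"
    and "Y \<subseteq> Vs"
    and "alpha \<subseteq> E"
    and "\<forall>e\<in>alpha. aa e \<in> X (fst e)"
    and "node_consistent Vs E Y alpha aa"
  shows "distr M N (\<lambda>\<omega>. restrict (edge_cf Vs E PO alpha aa \<omega>) Y)
       = distr M N (\<lambda>\<omega>. restrict (node_cf Vs E PO (induced_nodes alpha) (induced_vals alpha aa) \<omega>) Y)"
proof -
  have wf: "wf E" using dag_wf[OF assms(1)] .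
  have EV: "E \<subseteq> Vs \<times> Vs" and acyc: "acyclic E" using assms(1) by (auto simp: dag_def)
  have live: "live Vs E Y alpha"
    and cons: "\<forall>A. first_edges Vs E Y alpha A \<inter> alpha = {} \<or> first_edges Vs E Y alpha A \<subseteq> alpha"
    and same: "\<forall>e1\<in>alpha. \<forall>e2\<in>alpha. fst e1 = fst e2 \<longrightarrow> aa e1 = aa e2"
    using assms(6) unfolding node_consistent_def consistent_def by blast+
  define A where "A = induced_nodes alpha"
  define a where "a = induced_vals alpha aa"
  define R where "R = {V. \<exists>p. dpath Vs E p \<and> hd p = V \<and> last p \<in> Y \<and>
        (\<forall>i. Suc i < length p \<longrightarrow> (p ! i, p ! Suc i) \<notin> alpha)}"
  have YR: "Y \<subseteq> R"
  proof
    fix y assume "y \<in> Y"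
    then have "dpath Vs E [y] \<and> hd [y] = y \<and> last [y] \<in> Y \<and>
        (\<forall>i. Suc i < length [y] \<longrightarrow> ([y] ! i, [y] ! Suc i) \<notin> alpha)"
      using assms(3) by (auto simp: dpath_def)
    then show "y \<in> R" unfolding R_def by blast
  qed
  have aval: "a W = aa (W, V)" if "(W, V) \<in> alpha" for W V
  proof -
    have "\<exists>e. e \<in> alpha \<and> fst e = W" using that by force
    then have "(SOME e. e \<in> alpha \<and> fst e = W) \<in> alpha \<and> fst (SOME e. e \<in> alpha \<and> fst e = W) = W"
      by (rule someI_ex)
    then have "aa (SOME e. e \<in> alpha \<and> fst e = W) = aa (W, V)"
      using same that by (metis fst_conv)
    then show ?thesis unfolding a_def induced_vals_def .
  qed
  have main: "restrict (edge_cf Vs E PO alpha aa \<omega>) Y = restrict (node_cf Vs E PO A a \<omega>) Y" for \<omega>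
  proof -
    define f where "f = edge_cf Vs E PO alpha aa \<omega>"
    define h where "h = node_cf Vs E PO A a \<omega>"
    have f_eq: "\<forall>V\<in>Vs. f V = PO V (restrict (\<lambda>W. if (W, V) \<in> alpha then aa (W, V) else f W) (pa E V)) \<omega>"
      using cf_char[OF assms(1), of PO "\<lambda>W V. if (W, V) \<in> alpha then Some (aa (W, V)) else None" \<omega>]
      unfolding f_def edge_cf_def by (simp add: if_distrib cong: if_cong)
    have h_eq: "\<forall>V\<in>Vs. h V = PO V (restrict (\<lambda>W. if W \<in> A then a W else h W) (pa E V)) \<omega>"
      using cf_char[OF assms(1), of PO "\<lambda>W V. if W \<in> A then Some (a W) else None" \<omega>]
      unfolding h_def node_cf_def by (simp add: if_distrib cong: if_cong)
    have "\<forall>V. V \<in> R \<longrightarrow> f V = h V"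
    proof (rule allI, rule wf_induct[OF wf, where P="\<lambda>V. V \<in> R \<longrightarrow> f V = h V"])
      fix V assume IH: "\<forall>W. (W, V) \<in> E \<longrightarrow> W \<in> R \<longrightarrow> f W = h W"
      show "V \<in> R \<longrightarrow> f V = h V"
      proof
        assume "V \<in> R"
        then obtain p where p: "dpath Vs E p" "hd p = V" "last p \<in> Y"
          "\<forall>i. Suc i < length p \<longrightarrow> (p ! i, p ! Suc i) \<notin> alpha" unfolding R_def by blast
        have pne: "p \<noteq> []" using p(1) by (simp add: dpath_def)
        have V: "V \<in> Vs" using p(1,2) pne by (auto simp: dpath_def)
        have "restrict (\<lambda>W. if (W, V) \<in> alpha then aa (W, V) else f W) (pa E V)
            = restrict (\<lambda>W. if W \<in> A then a W else h W) (pa E V)"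
        proof (rule restrict_ext)
          fix W assume "W \<in> pa E V"
          then have WV: "(W, V) \<in> E" by (simp add: pa_def)
          show "(if (W, V) \<in> alpha then aa (W, V) else f W) = (if W \<in> A then a W else h W)"
          proof (cases "(W, V) \<in> alpha")
            case True
            then have "W \<in> A" unfolding A_def induced_nodes_def by force
            then show ?thesis using True aval by simp
          next
            case False
            let ?q = "W # p"
            have Wnot: "W \<notin> set p"
            proof
              assume "W \<in> set p"
              then have "(V, W) \<in> E\<^sup>*" using path_reach[of p E W] p(1,2) by (simp add: dpath_def)
              then have "(W, W) \<in> E\<^sup>+" using WV by simp
              then show False using acyc by (simp add: acyclic_def)
            qed
            have Wvs: "W \<in> Vs" using WV EV by auto
            have edges: "\<forall>i. Suc i < length ?q \<longrightarrow> (?q ! i, ?q ! Suc i) \<in> E"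
            proof (intro allI impI)
              fix i assume i: "Suc i < length ?q"
              show "(?q ! i, ?q ! Suc i) \<in> E"
              proof (cases i)
                case 0 then show ?thesis using WV p(2) pne by (cases p) auto
              next
                case (Suc j) then show ?thesis using i p(1) by (auto simp: dpath_def)
              qed
            qed
            have noalpha: "\<forall>i. Suc i < length ?q \<longrightarrow> (?q ! i, ?q ! Suc i) \<notin> alpha"
            proof (intro allI impI)
              fix i assume i: "Suc i < length ?q"
              show "(?q ! i, ?q ! Suc i) \<notin> alpha"
              proof (cases i)
                case 0 then show ?thesis using False p(2) pne by (cases p) auto
              next
                case (Suc j) then show ?thesis using i p(4) by auto
              qed
            qed
            have dq: "dpath Vs E ?q" using p(1) Wnot Wvs edges by (auto simp: dpath_def)
            have lq: "last ?q \<in> Y" using p(3) pne by simp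
            have WR: "W \<in> R" unfolding R_def using dq lq noalpha by auto
            have qrel: "?q \<in> rel Vs E Y alpha" unfolding rel_def using dq lq noalpha by auto
            have WA: "W \<notin> A"
            proof
              assume "W \<in> A"
              then obtain U where WU: "(W, U) \<in> alpha" unfolding A_def induced_nodes_def by force
              then obtain r where r: "r \<in> rel Vs E Y alpha" "2 \<le> length r" "(r ! 0, r ! 1) = (W, U)"
                using live unfolding live_def by blast
              have "hd r = W" using r by (cases r) auto
              then have "(W, U) \<in> first_edges Vs E Y alpha W"
                unfolding first_edges_def using r by (metis (mono_tags, lifting) mem_Collect_eq)
              then have sub: "first_edges Vs E Y alpha W \<subseteq> alpha" using cons WU by blast
              have "(?q ! 0, ?q ! 1) \<in> first_edges Vs E Y alpha W"
                unfolding first_edges_def using qrel pne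
              proof -
                have "2 \<le> length ?q" "hd ?q = W" using pne by (cases p, auto)+
                then show "(?q ! 0, ?q ! 1) \<in> {(p ! 0, p ! 1) |p. p \<in> rel Vs E Y alpha \<and> 2 \<le> length p \<and> hd p = W}"
                  using qrel by blast
              qed
              moreover have "(?q ! 0, ?q ! 1) = (W, V)" using p(2) pne by (cases p) auto
              ultimately show False using sub False by auto
            qed
            show ?thesis using False WA IH WV WR by simp
          qed
        qed
        then show "f V = h V" using f_eq h_eq V by simp
      qed
    qed
    then show ?thesis using YR unfolding f_def[symmetric] h_def[symmetric]
      by (intro restrict_ext) auto
  qed
  show ?thesis using main unfolding A_def a_def by simp
qed

end
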